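(* Let $c_0>0$, $\alpha_0,\tau_0>0$, $\gamma\in(1,2]$, and $$\alpha^*_{ksb}(\omega)=\frac{\alpha_0(-i\omega)}{c_0\sqrt{1+(-i\tau_0\omega)^{\gamma-1}}},\qquad\omega\in\mathbb{R}.$$ Then $K(\vec x,t)=\frac{1}{\sqrt{2\pi}}\mathcal{F}^{-1}\{e^{-\alpha^*_{ksb}(\cdot)|\vec x|}\}(t)$ is causal.
   Context: Fourier convention: $\mathcal{F}^{-1}\{\hat f\}(t)=\frac{1}{\sqrt{2\pi}}\int_{\mathbb{R}}e^{-i\omega t}\hat f(\omega)\,d\omega$ (tempered distributions). Complex powers are principal branch ($w=re^{i\phi}$, $\phi\in(-\pi,\pi)$, $w^\gamma=e^{\gamma(\log r+i\phi)}$); the square root is the complex root with non-negative real part. $K$ is causal if $t\mapsto K(\vec x,t)$ vanishes for $t<0$ for every $\vec x\in\mathbb{R}^3$. *)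

theory Defs
  imports "HOL-Analysis.Analysis"
begin

text \<open>Principal branch complex power
  (Isabelle's powr on complex uses the principal logarithm Ln) and csqrt
  (the square root with non-negative real part).\<close>
definition alpha_ksb :: "real \<Rightarrow> real \<Rightarrow> real \<Rightarrow> real \<Rightarrow> real \<Rightarrow> complex" where
  "alpha_ksb c0 \<alpha>0 \<tau>0 \<gamma> \<omega> =
     (of_real \<alpha>0 * (- \<i> * of_real \<omega>)) /
     (of_real c0 * csqrt (1 + (- \<i> * of_real (\<tau>0 * \<omega>)) powr of_real (\<gamma> - 1)))"

definition smooth_fun :: "(real \<Rightarrow> real) \<Rightarrow> bool" where
  "smooth_fun \<phi> \<longleftrightarrow> (\<forall>k t. ((deriv ^^ k) \<phi>) differentiable (at t))"

definition test_fun_neg :: "(real \<Rightarrow> real) \<Rightarrow> bool" where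
  "test_fun_neg \<phi> \<longleftrightarrow> smooth_fun \<phi> \<and> compact (closure {t. \<phi> t \<noteq> 0})
      \<and> closure {t. \<phi> t \<noteq> 0} \<subseteq> {..<0}"

definition inv_fourier_fun :: "(real \<Rightarrow> real) \<Rightarrow> real \<Rightarrow> complex" where
  "inv_fourier_fun \<phi> \<omega> =
     of_real (1 / sqrt (2 * pi)) * (LINT t|lborel. exp (- \<i> * of_real (\<omega> * t)) * of_real (\<phi> t))"

text \<open>Distributional (transposed) inverse Fourier transform of a locally integrable,
  tempered function g, paired with a test function phi:
  < F^{-1} g, phi > = \<integral> g(omega) (F^{-1} phi)(omega) d omega.\<close>
definition inv_fourier_pair :: "(real \<Rightarrow> complex) \<Rightarrow> (real \<Rightarrow> real) \<Rightarrow> complex" where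
  "inv_fourier_pair g \<phi> = (LINT \<omega>|lborel. g \<omega> * inv_fourier_fun \<phi> \<omega>)"

end

theory Submission
  imports Defs "HOL-Complex_Analysis.Complex_Analysis" "HOL-Probability.Sinc_Integral"
begin

lemma powr_cone:
  fixes s :: complex and \<beta> :: real
  assumes "0 \<le> Re s" "0 \<le> \<beta>" "\<beta> \<le> 1"
  shows "0 \<le> Re (s powr of_real \<beta>) \<and> 0 \<le> Re s * Re (s powr of_real \<beta>) + Im s * Im (s powr of_real \<beta>)"
proof (cases "s = 0")
  case True then show ?thesis by simp
next
  case False
  define \<theta> where "\<theta> = Im (Ln s)"
  define \<rho> where "\<rho> = norm s"
  have th: "\<bar>\<theta>\<bar> \<le> pi/2" using Re_Ln_pos_le[OF False] assms \<theta>_def by simp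
  have rho: "\<rho> > 0" using False \<rho>_def by simp
  have s: "s = exp (Ln s)" using False by simp
  have ReLn: "Re (Ln s) = ln \<rho>" using False \<rho>_def by simp
  have Res: "Re s = \<rho> * cos \<theta>" and Ims: "Im s = \<rho> * sin \<theta>"
    by (subst s, simp add: Re_exp Im_exp ReLn \<theta>_def rho)+
  have p: "s powr of_real \<beta> = exp (of_real \<beta> * Ln s)" using False by (simp add: powr_def)
  have Rep: "Re (s powr of_real \<beta>) = exp (\<beta> * ln \<rho>) * cos (\<beta> * \<theta>)"
    and Imp: "Im (s powr of_real \<beta>) = exp (\<beta> * ln \<rho>) * sin (\<beta> * \<theta>)"
    by (simp_all add: p Re_exp Im_exp ReLn \<theta>_def)
  have b1: "\<bar>\<beta> * \<theta>\<bar> \<le> pi/2"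
  proof -
    have "\<bar>\<beta> * \<theta>\<bar> = \<beta> * \<bar>\<theta>\<bar>" using assms by (simp add: abs_mult)
    also have "\<dots> \<le> 1 * \<bar>\<theta>\<bar>" using assms by (intro mult_right_mono) auto
    finally show ?thesis using th by simp
  qed
  have b2: "\<bar>\<theta> - \<beta> * \<theta>\<bar> \<le> pi/2"
  proof -
    have "\<bar>\<theta> - \<beta> * \<theta>\<bar> = (1 - \<beta>) * \<bar>\<theta>\<bar>" proof -
      have "\<theta> - \<beta> * \<theta> = (1 - \<beta>) * \<theta>" by (simp add: algebra_simps)
      then show ?thesis using assms by (simp add: abs_mult)
    qed
    also have "\<dots> \<le> 1 * \<bar>\<theta>\<bar>" using assms by (intro mult_right_mono) auto
    finally show ?thesis using th by simp
  qed
  have c1: "0 \<le> cos (\<beta> * \<theta>)" by (rule cos_ge_zero; use b1 in arith)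
  have c2: "0 \<le> cos (\<theta> - \<beta> * \<theta>)" by (rule cos_ge_zero; use b2 in arith)
  have "Re s * Re (s powr of_real \<beta>) + Im s * Im (s powr of_real \<beta>)
        = \<rho> * exp (\<beta> * ln \<rho>) * cos (\<theta> - \<beta> * \<theta>)"
    by (simp add: Res Ims Rep Imp cos_diff algebra_simps)
  also have "\<dots> \<ge> 0" using rho c2 by simp
  finally show ?thesis using Rep c1 by simp
qed

lemma sqrt_cone:
  fixes s u :: complex
  assumes "0 \<le> Re s" "1 \<le> Re u" "0 \<le> Re s * Re u + Im s * Im u"
  shows "0 \<le> Re (s / csqrt u)"
proof -
  define q where "q = csqrt u"
  have qq: "q * q = u" unfolding q_def by (metis power2_csqrt power2_eq_square)
  have "Re q \<noteq> 0"
  proof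
    assume "Re q = 0"
    then have "Re u = - (Im q * Im q)" by (simp add: qq[symmetric])
    then show False using assms(2) by (smt (verit) zero_le_square)
  qed
  then have x: "Re q > 0" using Re_csqrt q_def by (simp add: order_less_le)
  have Reu: "Re u = Re q ^2 - Im q ^2" and Imu: "Im u = 2 * Re q * Im q"
    using qq[symmetric] by (simp_all add: power2_eq_square)
  have h1: "0 \<le> Re s * (Re q ^2 + Im q^2)" using assms(1) by simp
  have "0 \<le> Re s * (Re q ^2 + Im q^2) + (Re s * Re u + Im s * Im u)"
    using h1 assms(3) by linarith
  also have "\<dots> = 2 * Re q * (Re s * Re q + Im s * Im q)"
    by (simp add: Reu Imu power2_eq_square algebra_simps)
  finally have "0 \<le> Re s * Re q + Im s * Im q"
    using x by (simp add: zero_le_mult_iff)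
  then show ?thesis unfolding q_def[symmetric] by (simp add: Re_divide)
qed

definition Ac :: "real \<Rightarrow> real \<Rightarrow> real \<Rightarrow> real \<Rightarrow> complex \<Rightarrow> complex" where
  "Ac c0 \<alpha>0 \<tau>0 \<gamma> z = (of_real \<alpha>0 * (- \<i> * z)) /
     (of_real c0 * csqrt (1 + (- \<i> * (of_real \<tau>0 * z)) powr of_real (\<gamma> - 1)))"

lemma alpha_Ac: "alpha_ksb c0 \<alpha>0 \<tau>0 \<gamma> \<omega> = Ac c0 \<alpha>0 \<tau>0 \<gamma> (of_real \<omega>)"
  by (simp add: alpha_ksb_def Ac_def)

lemma Ac_facts:
  fixes z :: complex
  assumes "c0 > 0" "\<alpha>0 > 0" "\<tau>0 > 0" "1 < \<gamma>" "\<gamma> \<le> 2" "0 \<le> Im z"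
  defines "u \<equiv> 1 + (- \<i> * (of_real \<tau>0 * z)) powr of_real (\<gamma> - 1)"
  shows "1 \<le> Re u" "0 \<le> Re (Ac c0 \<alpha>0 \<tau>0 \<gamma> z)"
proof -
  define s where "s = - \<i> * z"
  define p where "p = (of_real \<tau>0 * s) powr of_real (\<gamma> - 1)"
  have u: "u = 1 + p" unfolding u_def p_def s_def by (simp add: algebra_simps)
  have Res: "0 \<le> Re s" using assms by (simp add: s_def)
  have "0 \<le> Re (of_real \<tau>0 * s)" using Res assms by simp
  from powr_cone[OF this, of "\<gamma> - 1"] assms
  have pc: "0 \<le> Re p" "0 \<le> \<tau>0 * (Re s * Re p + Im s * Im p)"
    by (simp_all add: p_def algebra_simps)
  then have pc2: "0 \<le> Re s * Re p + Im s * Im p" using assms by (simp add: zero_le_mult_iff)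
  show "1 \<le> Re u" using pc by (simp add: u)
  have "0 \<le> Re s * Re u + Im s * Im u" using pc2 Res by (simp add: u algebra_simps)
  from sqrt_cone[OF Res \<open>1 \<le> Re u\<close> this] have "0 \<le> Re (s / csqrt u)" .
  moreover have "Ac c0 \<alpha>0 \<tau>0 \<gamma> z = of_real (\<alpha>0 / c0) * (s / csqrt u)"
    unfolding Ac_def u_def s_def by (simp only: of_real_divide times_divide_times_eq)
  moreover have "\<And>k w. Re (of_real k * w) = k * Re w" by simp
  ultimately show "0 \<le> Re (Ac c0 \<alpha>0 \<tau>0 \<gamma> z)" using assms
    by (metis divide_pos_pos less_eq_real_def mult_nonneg_nonneg)
qed

lemma Ac_norm_exp:
  assumes "c0 > 0" "\<alpha>0 > 0" "\<tau>0 > 0" "1 < \<gamma>" "\<gamma> \<le> 2" "0 \<le> Im z" "0 \<le> r"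
  shows "norm (exp (- Ac c0 \<alpha>0 \<tau>0 \<gamma> z * of_real r)) \<le> 1"
  using Ac_facts(2)[OF assms(1-6)] assms(7) by (simp add: mult_nonneg_nonneg)

lemma Ac_bound:
  assumes "c0 > 0" "\<alpha>0 > 0" "\<tau>0 > 0" "1 < \<gamma>" "\<gamma> \<le> 2" "0 \<le> Im z"
  shows "norm (Ac c0 \<alpha>0 \<tau>0 \<gamma> z) \<le> \<alpha>0 / c0 * norm z"
proof -
  define u where "u = 1 + (- \<i> * (of_real \<tau>0 * z)) powr of_real (\<gamma> - 1)"
  have "1 \<le> Re u" using Ac_facts(1)[OF assms] u_def by simp
  then have "1 \<le> norm u" using complex_Re_le_cmod order_trans by blast
  moreover have "norm u = norm (csqrt u) ^ 2" by (metis norm_power power2_csqrt)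
  ultimately have q: "1 \<le> norm (csqrt u)"
    by (metis abs_of_nonneg norm_ge_zero one_le_power real_sqrt_ge_one real_sqrt_abs power2_eq_square) 
  have "norm (Ac c0 \<alpha>0 \<tau>0 \<gamma> z) = \<alpha>0 * norm z / (c0 * norm (csqrt u))"
    unfolding Ac_def u_def using assms by (simp add: norm_divide norm_mult)
  also have "\<dots> \<le> \<alpha>0 * norm z / (c0 * 1)"
    using assms q by (intro divide_left_mono mult_left_mono mult_pos_pos) (auto simp del: norm_csqrt)
  finally show ?thesis by simp
qed

lemma Ac_deriv:
  assumes "c0 > 0" "\<alpha>0 > 0" "\<tau>0 > 0" "1 < \<gamma>" "\<gamma> \<le> 2" "0 \<le> Im z" "z \<noteq> 0"
  shows "Ac c0 \<alpha>0 \<tau>0 \<gamma> field_differentiable at z"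
proof -
  define u where "u = 1 + (- \<i> * (of_real \<tau>0 * z)) powr of_real (\<gamma> - 1)"
  have "1 \<le> Re u" using Ac_facts(1)[OF assms(1-6)] u_def by simp
  then have u0: "u \<notin> \<real>\<^sub>\<le>\<^sub>0" by (auto simp: nonpos_Reals_def)
  have s0: "- \<i> * (of_real \<tau>0 * z) \<notin> \<real>\<^sub>\<le>\<^sub>0"
  proof
    assume "- \<i> * (of_real \<tau>0 * z) \<in> \<real>\<^sub>\<le>\<^sub>0"
    then obtain r where r: "- \<i> * (of_real \<tau>0 * z) = of_real r" "r \<le> 0"
      by (auto simp: nonpos_Reals_def)
    have a: "\<tau>0 * Im z = r" using arg_cong[OF r(1), of Re] by simp
    have b: "\<tau>0 * Re z = 0" using arg_cong[OF r(1), of Im] by simp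
    have "Re z = 0" using b assms(3) by simp
    moreover have "Im z = 0" using a r(2) assms(3,6)
      by (metis mult_le_0_iff mult_pos_pos not_le order_le_less)
    ultimately show False using assms(7) complex_eq_iff by auto
  qed
  have q0: "csqrt u \<noteq> 0" using u0 by auto
  have d1: "((\<lambda>z. (- \<i> * (of_real \<tau>0 * z)) powr of_real (\<gamma> - 1)) has_field_derivative
          (of_real (\<gamma> - 1) * (- \<i> * (of_real \<tau>0 * z)) powr (of_real (\<gamma> - 1) - 1)) * (- \<i> * of_real \<tau>0)) (at z)"
    by (rule DERIV_chain2[where g="\<lambda>z. - \<i> * (of_real \<tau>0 * z)", OF has_field_derivative_powr[OF s0, of "of_real (\<gamma> - 1)"]]) (auto intro!: derivative_eq_intros)
  have d1': "((\<lambda>z. 1 + (- \<i> * (of_real \<tau>0 * z)) powr of_real (\<gamma> - 1)) has_field_derivative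
          (0 + (of_real (\<gamma> - 1) * (- \<i> * (of_real \<tau>0 * z)) powr (of_real (\<gamma> - 1) - 1)) * (- \<i> * of_real \<tau>0))) (at z)"
    by (rule DERIV_add[OF DERIV_const d1])
  have u0': "(\<lambda>z. 1 + (- \<i> * (of_real \<tau>0 * z)) powr of_real (\<gamma> - 1)) z \<notin> \<real>\<^sub>\<le>\<^sub>0"
    using u0 by (simp add: u_def)
  obtain D2 where d2: "((\<lambda>z. csqrt (1 + (- \<i> * (of_real \<tau>0 * z)) powr of_real (\<gamma> - 1))) has_field_derivative D2) (at z)"
    using DERIV_chain2[where f=csqrt and g="\<lambda>z. 1 + (- \<i> * (of_real \<tau>0 * z)) powr of_real (\<gamma> - 1)",
       OF has_field_derivative_csqrt[OF u0'] d1'] by blast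
  have dn: "((\<lambda>z. of_real \<alpha>0 * (- \<i> * z)) has_field_derivative of_real \<alpha>0 * (- \<i>)) (at z)"
    by (auto intro!: derivative_eq_intros)
  have q0': "of_real c0 * csqrt (1 + (- \<i> * (of_real \<tau>0 * z)) powr of_real (\<gamma> - 1)) \<noteq> 0"
    using q0 assms(1) by (simp add: u_def)
  show ?thesis unfolding Ac_def field_differentiable_def
    using DERIV_divide[OF dn DERIV_cmult[OF d2, of "of_real c0"] q0'] by blast
qed


lemma Ac_cont:
  assumes "c0 > 0" "\<alpha>0 > 0" "\<tau>0 > 0" "1 < \<gamma>" "\<gamma> \<le> 2"
  shows "continuous_on {z. 0 \<le> Im z} (Ac c0 \<alpha>0 \<tau>0 \<gamma>)"
  unfolding continuous_on_eq_continuous_within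
proof
  fix z assume z: "z \<in> {z. 0 \<le> Im z}"
  show "continuous (at z within {z. 0 \<le> Im z}) (Ac c0 \<alpha>0 \<tau>0 \<gamma>)"
  proof (cases "z = 0")
    case False
    then have "Ac c0 \<alpha>0 \<tau>0 \<gamma> field_differentiable at z" using Ac_deriv[OF assms] z by auto
    then show ?thesis
      by (rule continuous_at_imp_continuous_within[OF field_differentiable_imp_continuous_at])
  next
    case True
    have A0: "Ac c0 \<alpha>0 \<tau>0 \<gamma> 0 = 0" by (simp add: Ac_def)
    have ev: "\<forall>\<^sub>F x in at 0 within {z. 0 \<le> Im z}. norm (Ac c0 \<alpha>0 \<tau>0 \<gamma> x) \<le> \<alpha>0 / c0 * norm x"
    proof -
      have "\<forall>x. x \<noteq> 0 \<longrightarrow> x \<in> {z. 0 \<le> Im z} \<longrightarrow> norm (Ac c0 \<alpha>0 \<tau>0 \<gamma> x) \<le> \<alpha>0 / c0 * norm x"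
        using Ac_bound[OF assms] by auto
      then show ?thesis unfolding eventually_at_filter by (intro always_eventually) auto
    qed
    have "((\<lambda>x. \<alpha>0 / c0 * norm x) \<longlongrightarrow> 0) (at 0 within {z. 0 \<le> Im z})"
      by (intro tendsto_mult_right_zero tendsto_norm_zero tendsto_ident_at)
    from Lim_null_comparison[OF ev this] show ?thesis
      using True A0 by (simp add: continuous_within)
  qed
qed



lemma cont_sub: "continuous_on UNIV f \<Longrightarrow> continuous_on A f"
  by (rule continuous_on_subset[OF _ subset_UNIV])

definition Ef :: "complex \<Rightarrow> real \<Rightarrow> complex" where
  "Ef z t = exp (- \<i> * (z * of_real t))"

lemma norm_Ef: "norm (Ef z t) = exp (t * Im z)"
  by (simp add: Ef_def mult.commute)

lemma Ef_le: "t \<le> b \<Longrightarrow> 0 \<le> Im z \<Longrightarrow> norm (Ef z t) \<le> exp (b * Im z)"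
  by (simp add: norm_Ef mult_right_mono)

lemma Ef_cont: "continuous_on A (Ef z)"
  unfolding Ef_def by (intro continuous_intros)

lemma int_bound:
  assumes "continuous_on {a..b} g" "a \<le> b" "\<And>t. t \<in> {a..b} \<Longrightarrow> \<bar>g t\<bar> \<le> M" "0 \<le> Im z"
  shows "norm (integral {a..b} (\<lambda>t. Ef z t * of_real (g t))) \<le> M * exp (b * Im z) * (b - a)"
proof -
  have M: "0 \<le> M" using assms(3)[of a] assms(2) by auto
  have "continuous_on {a..b} (\<lambda>t. Ef z t * of_real (g t))"
    using assms(1) by (intro continuous_intros Ef_cont)
  then have i: "((\<lambda>t. Ef z t * of_real (g t)) has_integral integral {a..b} (\<lambda>t. Ef z t * of_real (g t))) {a..b}"
    by (intro integrable_integral integrable_continuous_real)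
  have "norm (integral {a..b} (\<lambda>t. Ef z t * of_real (g t))) \<le> M * exp (b * Im z) * measure lborel {a..b}"
  proof (rule has_integral_bound_real[OF _ _ i])
    show "0 \<le> M * exp (b * Im z)" using M by simp
    fix t assume t: "t \<in> {a..b} - {}"
    have "norm (Ef z t * of_real (g t)) = norm (Ef z t) * \<bar>g t\<bar>" by (simp add: norm_mult)
    also have "\<dots> \<le> exp (b * Im z) * M"
      using t assms(3,4) by (intro mult_mono Ef_le) auto
    finally show "norm (Ef z t * of_real (g t)) \<le> M * exp (b * Im z)" by (simp add: mult.commute)
  qed auto
  then show ?thesis using assms(2) by simp
qed

lemma supp_interval:
  assumes "test_fun_neg \<phi>"
  obtains a b where "a < b" "b < 0" "\<And>t. t \<le> a \<or> b \<le> t \<Longrightarrow> \<phi> t = 0 \<and> deriv \<phi> t = 0"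
proof -
  define S where "S = closure {t. \<phi> t \<noteq> 0}"
  have cS: "compact S" and S0: "S \<subseteq> {..<0}" using assms by (auto simp: test_fun_neg_def S_def)
  obtain b0 where b0: "b0 < 0" "S \<subseteq> {..b0}"
  proof (cases "S = {}")
    case True then show ?thesis using that[of "-1"] by auto
  next
    case False
    from compact_attains_sup[OF cS False] obtain m where "m \<in> S" "\<forall>x\<in>S. x \<le> m" by auto
    then show ?thesis using that[of m] S0 by auto
  qed
  obtain B where B: "\<forall>x\<in>S. \<bar>x\<bar> \<le> B" using compact_imp_bounded[OF cS] bounded_real by auto
  define a0 where "a0 = - B"
  have a0: "S \<subseteq> {a0..}" using B by (force simp: a0_def)
  define a where "a = min a0 b0 - 1"
  define b where "b = b0 / 2"
  have ab: "a < b" "b < 0" using b0 by (auto simp: a_def b_def)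
  define U where "U = {x. x < a0} \<union> {x. b0 < x}"
  have oU: "open U" unfolding U_def by (intro open_Un open_lessThan open_greaterThan[unfolded greaterThan_def] open_lessThan[unfolded lessThan_def])
  have U0: "\<phi> x = 0" if "x \<in> U" for x
  proof -
    have "x \<notin> S"
    proof
      assume "x \<in> S"
      then have "a0 \<le> x" "x \<le> b0" using a0 b0 by auto
      then show False using that unfolding U_def by auto
    qed
    then have "x \<notin> {t. \<phi> t \<noteq> 0}" unfolding S_def using closure_subset by (metis subsetD)
    then show ?thesis by simp
  qed
  show ?thesis
  proof (rule that[OF ab])
    fix t assume t: "t \<le> a \<or> b \<le> t"
    then have tU: "t \<in> U" unfolding U_def a_def b_def using b0 by auto
    have "((\<lambda>_. 0) has_real_derivative 0) (at t)" by simp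
    then have "(\<phi> has_real_derivative 0) (at t)"
      by (rule has_field_derivative_transform_within_open[OF _ oU tU]) (use U0 in auto)
    then show "\<phi> t = 0 \<and> deriv \<phi> t = 0" using U0[OF tU] DERIV_imp_deriv by blast
  qed
qed

lemma smooth_derivs:
  assumes "smooth_fun \<phi>"
  shows "\<And>t. (\<phi> has_real_derivative deriv \<phi> t) (at t)"
    "\<And>t. (deriv \<phi> has_real_derivative deriv (deriv \<phi>) t) (at t)"
    "continuous_on UNIV (deriv (deriv \<phi>))"
    "continuous_on UNIV \<phi>"
proof -
  have d: "\<And>k t. ((deriv ^^ k) \<phi>) differentiable (at t)" using assms by (simp add: smooth_fun_def)
  show d0: "\<And>t. (\<phi> has_real_derivative deriv \<phi> t) (at t)"
    using d[of 0] by (simp add: DERIV_deriv_iff_real_differentiable)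
  show "\<And>t. (deriv \<phi> has_real_derivative deriv (deriv \<phi>) t) (at t)"
    using d[of 1] by (simp add: DERIV_deriv_iff_real_differentiable)
  have "\<And>t. (deriv (deriv \<phi>)) differentiable (at t)" using d[of 2] by (simp add: numeral_2_eq_2)
  then show "continuous_on UNIV (deriv (deriv \<phi>))"
    by (intro continuous_at_imp_continuous_on ballI differentiable_imp_continuous_within)
  show "continuous_on UNIV \<phi>"
    using d0 by (intro continuous_at_imp_continuous_on ballI DERIV_isCont)
qed

definition Psi :: "(real \<Rightarrow> real) \<Rightarrow> real \<Rightarrow> real \<Rightarrow> complex \<Rightarrow> complex" where
  "Psi \<phi> a b z = integral {a..b} (\<lambda>t. Ef z t * of_real (\<phi> t))"

lemma Psi_deriv:
  assumes "continuous_on UNIV \<phi>"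
  shows "Psi \<phi> a b field_differentiable at z"
proof -
  have "((\<lambda>z. integral (cbox a b) (\<lambda>t. Ef z t * of_real (\<phi> t))) has_field_derivative
          integral (cbox a b) (\<lambda>t. - \<i> * of_real t * Ef z t * of_real (\<phi> t))) (at z within UNIV)"
  proof (rule leibniz_rule_field_derivative)
    fix x :: complex and t :: real
    show "((\<lambda>x. Ef x t * of_real (\<phi> t)) has_field_derivative - \<i> * of_real t * Ef x t * of_real (\<phi> t)) (at x within UNIV)"
      unfolding Ef_def by (auto intro!: derivative_eq_intros simp: algebra_simps)
  next
    fix x :: complex
    show "(\<lambda>t. Ef x t * of_real (\<phi> t)) integrable_on cbox a b"
      unfolding cbox_interval by (intro integrable_continuous_real continuous_intros Ef_cont cont_sub[OF assms])
  next
    have c: "continuous_on (UNIV \<times> cbox a b) (\<lambda>x. \<phi> (snd x))"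
      by (rule continuous_on_compose2[OF assms continuous_on_snd]) auto
    show "continuous_on (UNIV \<times> cbox a b) (\<lambda>(x, t). - \<i> * of_real t * Ef x t * of_real (\<phi> t))"
      unfolding Ef_def case_prod_beta by (intro continuous_intros c)
  qed auto
  then show ?thesis unfolding field_differentiable_def Psi_def by auto
qed

lemma Psi_ibp:
  assumes "a \<le> b"
    and d1: "\<And>t. (\<phi> has_real_derivative \<phi>' t) (at t)"
    and d2: "\<And>t. (\<phi>' has_real_derivative \<phi>'' t) (at t)"
    and c2: "continuous_on UNIV \<phi>''"
    and z: "\<phi> a = 0" "\<phi>' a = 0" "\<phi> b = 0" "\<phi>' b = 0"
  shows "z^2 * Psi \<phi> a b z = - integral {a..b} (\<lambda>t. Ef z t * of_real (\<phi>'' t))"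
proof -
  define G where "G t = Ef z t * (of_real (\<phi>' t) + \<i> * z * of_real (\<phi> t))" for t
  have c0: "continuous_on UNIV \<phi>" using d1 by (intro continuous_at_imp_continuous_on ballI DERIV_isCont)
  have "((\<lambda>t. Ef z t * (z^2 * of_real (\<phi> t)) + Ef z t * of_real (\<phi>'' t)) has_integral (G b - G a)) {a..b}"
  proof (rule fundamental_theorem_of_calculus[OF assms(1)])
    fix t assume "t \<in> {a..b}"
    have e0: "((\<lambda>w. exp (- \<i> * (z * w))) has_field_derivative exp (- \<i> * (z * of_real t)) * (- \<i> * z)) (at (of_real t))"
      by (auto intro!: derivative_eq_intros)
    have e: "(Ef z has_vector_derivative (Ef z t * (- \<i> * z))) (at t within {a..b})"
      using has_vector_derivative_real_field[OF e0] unfolding Ef_def .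
    have p1: "((\<lambda>t. of_real (\<phi>' t) :: complex) has_vector_derivative of_real (\<phi>'' t)) (at t within {a..b})"
      by (rule has_vector_derivative_of_real, rule has_field_derivative_at_within, rule d2)
    have p2: "((\<lambda>t. of_real (\<phi> t) :: complex) has_vector_derivative of_real (\<phi>' t)) (at t within {a..b})"
      by (rule has_vector_derivative_of_real, rule has_field_derivative_at_within, rule d1)
    have p: "((\<lambda>t. of_real (\<phi>' t) + \<i> * z * of_real (\<phi> t)) has_vector_derivative
              (of_real (\<phi>'' t) + \<i> * z * of_real (\<phi>' t))) (at t within {a..b})"
      by (intro has_vector_derivative_add has_vector_derivative_mult_right p1 p2)
    have "(G has_vector_derivative (Ef z t * (of_real (\<phi>'' t) + \<i> * z * of_real (\<phi>' t)) +
            Ef z t * (- \<i> * z) * (of_real (\<phi>' t) + \<i> * z * of_real (\<phi> t)))) (at t within {a..b})"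
      unfolding G_def by (rule has_vector_derivative_mult[OF e p])
    then show "(G has_vector_derivative (Ef z t * (z^2 * of_real (\<phi> t)) + Ef z t * of_real (\<phi>'' t))) (at t within {a..b})"
      by (rule has_vector_derivative_eq_rhs) (simp add: algebra_simps power2_eq_square)
  qed
  moreover have "G b - G a = 0" using z by (simp add: G_def)
  ultimately have I: "((\<lambda>t. Ef z t * (z^2 * of_real (\<phi> t)) + Ef z t * of_real (\<phi>'' t)) has_integral 0) {a..b}" by simp
  have i1: "(\<lambda>t. Ef z t * of_real (\<phi> t)) integrable_on {a..b}"
    by (intro integrable_continuous_real continuous_intros Ef_cont cont_sub[OF c0])
  have i2: "(\<lambda>t. Ef z t * of_real (\<phi>'' t)) integrable_on {a..b}"
    by (intro integrable_continuous_real continuous_intros Ef_cont cont_sub[OF c2])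
  have "integral {a..b} (\<lambda>t. Ef z t * (z^2 * of_real (\<phi> t)) + Ef z t * of_real (\<phi>'' t))
      = z^2 * Psi \<phi> a b z + integral {a..b} (\<lambda>t. Ef z t * of_real (\<phi>'' t))"
  proof -
    have "(\<lambda>t. Ef z t * (z^2 * of_real (\<phi> t))) = (\<lambda>t. z^2 * (Ef z t * of_real (\<phi> t)))"
      by (simp add: algebra_simps)
    then have "integral {a..b} (\<lambda>t. Ef z t * (z^2 * of_real (\<phi> t))) = z^2 * Psi \<phi> a b z"
      unfolding Psi_def by (simp add: integral_mult_right)
    moreover have "(\<lambda>t. Ef z t * (z^2 * of_real (\<phi> t))) integrable_on {a..b}"
      using integrable_on_mult_right[OF i1, of "z^2"] by (simp add: algebra_simps)
    ultimately show ?thesis using i2 by (simp add: integral_add)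
  qed
  then show ?thesis using integral_unique[OF I] by (simp add: eq_neg_iff_add_eq_0)
qed

lemma inv_fourier_Psi:
  assumes "continuous_on UNIV \<phi>" "\<And>t. t \<le> a \<or> b \<le> t \<Longrightarrow> \<phi> t = 0"
  shows "inv_fourier_fun \<phi> \<omega> = of_real (1 / sqrt (2 * pi)) * Psi \<phi> a b (of_real \<omega>)"
proof -
  define f where "f t = Ef (of_real \<omega>) t * of_real (\<phi> t)" for t
  have feq: "(\<lambda>t. exp (- \<i> * of_real (\<omega> * t)) * of_real (\<phi> t)) = (\<lambda>t. indicator {a..b} t *\<^sub>R f t)"
  proof
    fix t
    show "exp (- \<i> * of_real (\<omega> * t)) * of_real (\<phi> t) = indicator {a..b} t *\<^sub>R f t"
    proof (cases "t \<in> {a..b}")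
      case True then show ?thesis by (simp add: f_def Ef_def)
    next
      case False
      then have "t \<le> a \<or> b \<le> t" by auto
      then show ?thesis using False assms(2) by (simp add: f_def)
    qed
  qed
  have si: "set_integrable lborel {a..b} f"
    unfolding f_def
    by (intro borel_integrable_atLeastAtMost' continuous_intros Ef_cont cont_sub[OF assms(1)])
  have "(LINT t|lborel. exp (- \<i> * of_real (\<omega> * t)) * of_real (\<phi> t)) = (LINT t:{a..b}|lborel. f t)"
    by (simp only: feq set_lebesgue_integral_def)
  also have "\<dots> = integral {a..b} f" by (rule set_borel_integral_eq_integral(2)[OF si])
  finally show ?thesis unfolding inv_fourier_fun_def Psi_def f_def by simp
qed


lemma seg_ReIm:
  assumes "x \<in> closed_segment A B"
  obtains u where "0 \<le> u" "u \<le> 1" "Re x = (1 - u) * Re A + u * Re B" "Im x = (1 - u) * Im A + u * Im B"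
  using assms unfolding in_segment by auto

lemma interior_Im_pos:
  assumes "x \<in> interior {z. 0 \<le> Im z}"
  shows "0 < Im x"
proof -
  obtain e where e: "e > 0" "ball x e \<subseteq> {z. 0 \<le> Im z}" using assms mem_interior by blast
  have "dist x (x - \<i> * of_real (e/2)) = e/2" using e by (simp add: dist_norm norm_mult)
  then have "x - \<i> * of_real (e/2) \<in> ball x e" using e by simp
  then have "0 \<le> Im (x - \<i> * of_real (e/2))" using e(2) by blast
  then show ?thesis using e by simp
qed

lemma lim_aux:
  fixes b K :: real
  assumes "b < 0" "0 \<le> K"
  shows "((\<lambda>R. 2 * K / R + 2 * K * R * exp (b * R)) \<longlongrightarrow> 0) at_top"
proof -
  define c where "c = - b"
  have c: "c > 0" using assms by (simp add: c_def)
  have fc: "filterlim (\<lambda>R::real. c * R) at_top at_top"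
    by (rule filterlim_tendsto_pos_mult_at_top[OF tendsto_const c filterlim_ident])
  have "((\<lambda>R. (c * R) ^ 1 / exp (c * R)) \<longlongrightarrow> 0) at_top"
    using filterlim_compose[OF tendsto_power_div_exp_0[of 1] fc] by (simp add: o_def)
  then have "((\<lambda>R. (2 * K / c) * ((c * R) ^ 1 / exp (c * R))) \<longlongrightarrow> (2 * K / c) * 0) at_top"
    by (intro tendsto_mult tendsto_const)
  moreover have "(\<lambda>R. (2 * K / c) * ((c * R) ^ 1 / exp (c * R))) = (\<lambda>R. 2 * K * R * exp (b * R))"
    using c by (auto simp: c_def exp_minus field_simps)
  ultimately have 1: "((\<lambda>R. 2 * K * R * exp (b * R)) \<longlongrightarrow> 0) at_top" by simp
  have 2: "((\<lambda>R. 2 * K / R) \<longlongrightarrow> 0) at_top"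
    by (intro tendsto_divide_0[OF tendsto_const] filterlim_at_top_imp_at_infinity[OF filterlim_ident])
  show ?thesis using tendsto_add[OF 2 1] by simp
qed

lemma main_lemma:
  fixes \<phi> \<phi>' \<phi>'' :: "real \<Rightarrow> real"
  assumes A: "c0 > 0" "\<alpha>0 > 0" "\<tau>0 > 0" "1 < \<gamma>" "\<gamma> \<le> 2" and r: "0 \<le> r"
    and ab: "a < b" "b < 0"
    and d1: "\<And>t. (\<phi> has_real_derivative \<phi>' t) (at t)"
    and d2: "\<And>t. (\<phi>' has_real_derivative \<phi>'' t) (at t)"
    and c2: "continuous_on UNIV \<phi>''"
    and z: "\<phi> a = 0" "\<phi>' a = 0" "\<phi> b = 0" "\<phi>' b = 0"
  defines "h \<equiv> \<lambda>z. exp (- Ac c0 \<alpha>0 \<tau>0 \<gamma> z * of_real r) * Psi \<phi> a b z"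
  shows "integrable lborel (\<lambda>\<omega>. h (of_real \<omega>))" "(LINT \<omega>|lborel. h (of_real \<omega>)) = 0"
proof -
  define S where "S = {z::complex. 0 \<le> Im z}"
  have c0: "continuous_on UNIV \<phi>" using d1 by (intro continuous_at_imp_continuous_on ballI DERIV_isCont)
  have "continuous_on {a..b} (\<lambda>t. \<bar>\<phi> t\<bar> + \<bar>\<phi>'' t\<bar>)"
    by (intro continuous_intros cont_sub[OF c0] cont_sub[OF c2])
  from continuous_attains_sup[OF compact_Icc _ this] ab obtain m where
    m: "\<forall>t\<in>{a..b}. \<bar>\<phi> t\<bar> + \<bar>\<phi>'' t\<bar> \<le> \<bar>\<phi> m\<bar> + \<bar>\<phi>'' m\<bar>" by auto
  define M where "M = \<bar>\<phi> m\<bar> + \<bar>\<phi>'' m\<bar>"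
  have M1: "\<bar>\<phi> t\<bar> \<le> M" if "t \<in> {a..b}" for t
    using m[rule_format, OF that] abs_ge_zero[of "\<phi>'' t"] unfolding M_def by linarith
  have M2: "\<bar>\<phi>'' t\<bar> \<le> M" if "t \<in> {a..b}" for t
    using m[rule_format, OF that] abs_ge_zero[of "\<phi> t"] unfolding M_def by linarith
  have M0: "0 \<le> M" using M1[of a] ab by auto
  define K where "K = M * (b - a)"
  have K0: "0 \<le> K" using M0 ab by (simp add: K_def)
  have expb: "exp (b * Im z) \<le> 1" if "0 \<le> Im z" for z
    using ab that by (simp add: mult_nonpos_nonneg)
  have PB: "norm (Psi \<phi> a b z) \<le> K * exp (b * Im z)" if "0 \<le> Im z" for z
    using int_bound[of a b \<phi> M z, OF cont_sub[OF c0]] M1 ab that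
    by (auto simp: Psi_def K_def mult_ac)
  have PB2: "norm z ^ 2 * norm (Psi \<phi> a b z) \<le> K * exp (b * Im z)" if "0 \<le> Im z" for z
  proof -
    have "norm z ^ 2 * norm (Psi \<phi> a b z) = norm (z^2 * Psi \<phi> a b z)" by (simp add: norm_mult norm_power)
    also have "\<dots> = norm (integral {a..b} (\<lambda>t. Ef z t * of_real (\<phi>'' t)))"
      using Psi_ibp[OF less_imp_le[OF ab(1)] d1 d2 c2 z] by simp
    also have "\<dots> \<le> K * exp (b * Im z)"
      using int_bound[of a b \<phi>'' M z, OF cont_sub[OF c2]] M2 ab that
      by (auto simp: K_def mult_ac)
    finally show ?thesis .
  qed
  have hP: "norm (h z) \<le> norm (Psi \<phi> a b z)" if "0 \<le> Im z" for z
  proof -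
    have "norm (h z) = norm (exp (- Ac c0 \<alpha>0 \<tau>0 \<gamma> z * of_real r)) * norm (Psi \<phi> a b z)"
      by (simp add: h_def norm_mult)
    also have "\<dots> \<le> 1 * norm (Psi \<phi> a b z)"
      by (intro mult_right_mono Ac_norm_exp[OF A that r]) auto
    finally show ?thesis by simp
  qed
  have PD: "Psi \<phi> a b field_differentiable at z" for z using Psi_deriv[OF c0] .
  have Pc: "continuous_on UNIV (Psi \<phi> a b)"
    using PD by (intro continuous_at_imp_continuous_on ballI field_differentiable_imp_continuous_at)
  have cA: "continuous_on S (\<lambda>z. Ac c0 \<alpha>0 \<tau>0 \<gamma> z)" using Ac_cont[OF A] by (simp add: S_def)
  have cP: "continuous_on S (\<lambda>z. Psi \<phi> a b z)" using cont_sub[OF Pc] .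
  have hc: "continuous_on S h"
    unfolding h_def by (intro continuous_on_mult continuous_on_exp continuous_on_minus continuous_on_const cA cP)
  have HAc: "Ac c0 \<alpha>0 \<tau>0 \<gamma> holomorphic_on {z. 0 < Im z}"
    unfolding holomorphic_on_def
    by (auto intro: field_differentiable_at_within[OF Ac_deriv[OF A]])
  have HP: "Psi \<phi> a b holomorphic_on {z. 0 < Im z}"
    unfolding holomorphic_on_def by (simp add: field_differentiable_at_within[OF PD])
  have Hh: "h holomorphic_on {z. 0 < Im z}"
    unfolding h_def by (intro holomorphic_intros HAc HP)
  have openUHP: "open {z::complex. 0 < Im z}"
    by (simp add: open_halfspace_Im_gt)
  have hd: "h field_differentiable at x" if "x \<in> interior S - {}" for x
    using that interior_Im_pos[of x] holomorphic_on_imp_differentiable_at[OF Hh openUHP]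
    by (auto simp: S_def)
  have convS: "convex S" unfolding S_def by (rule convex_halfspace_Im_ge)
  have Rbound: "norm (integral {-R..R} (\<lambda>x. h (of_real x))) \<le> 2 * K / R + 2 * K * R * exp (b * R)"
    if R: "R > 0" for R
  proof -
    define A1 where "A1 = Complex (-R) 0"
    define A2 where "A2 = Complex R 0"
    define A3 where "A3 = Complex R R"
    define A4 where "A4 = Complex (-R) R"
    have inS: "A1 \<in> S" "A2 \<in> S" "A3 \<in> S" "A4 \<in> S" using R by (auto simp: S_def A1_def A2_def A3_def A4_def)
    have segS: "closed_segment P Q \<subseteq> S" if "P \<in> S" "Q \<in> S" for P Q
      using closed_segment_subset[OF that convS] .
    have ci: "h contour_integrable_on linepath P Q" if "P \<in> S" "Q \<in> S" for P Q
      by (rule contour_integrable_continuous_linepath, rule continuous_on_subset[OF hc segS[OF that]])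
    define I1 where "I1 = contour_integral (linepath A1 A2) h"
    define I2 where "I2 = contour_integral (linepath A2 A3) h"
    define I3 where "I3 = contour_integral (linepath A3 A4) h"
    define I4 where "I4 = contour_integral (linepath A4 A1) h"
    have h1: "(h has_contour_integral I1) (linepath A1 A2)" unfolding I1_def using ci inS by (auto intro: has_contour_integral_integral)
    have h2: "(h has_contour_integral I2) (linepath A2 A3)" unfolding I2_def using ci inS by (auto intro: has_contour_integral_integral)
    have h3: "(h has_contour_integral I3) (linepath A3 A4)" unfolding I3_def using ci inS by (auto intro: has_contour_integral_integral)
    have h4: "(h has_contour_integral I4) (linepath A4 A1)" unfolding I4_def using ci inS by (auto intro: has_contour_integral_integral)
    define g where "g = linepath A1 A2 +++ (linepath A2 A3 +++ (linepath A3 A4 +++ linepath A4 A1))"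
    have vg: "valid_path g" unfolding g_def
      by (intro valid_path_join valid_path_linepath) auto
    have pg: "path_image g \<subseteq> S" unfolding g_def
      using segS inS by (simp add: path_image_join)
    have cg: "pathfinish g = pathstart g" unfolding g_def by simp
    have "(h has_contour_integral 0) g"
      by (rule Cauchy_theorem_convex[OF hc convS finite.emptyI hd vg pg cg])
    moreover have "(h has_contour_integral (I1 + (I2 + (I3 + I4)))) g" unfolding g_def
      by (intro has_contour_integral_join h1 h2 h3 h4 valid_path_join valid_path_linepath) auto
    ultimately have sum0: "I1 + (I2 + (I3 + I4)) = 0" using has_contour_integral_unique by blast
    have "((\<lambda>x. h (of_real x)) has_integral I1) {Re A1..Re A2}"
      using h1 has_contour_integral_linepath_Reals_iff[of A1 A2 h I1] R
      by (auto simp: A1_def A2_def complex_is_Real_iff)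
    then have I1eq: "integral {-R..R} (\<lambda>x. h (of_real x)) = I1"
      by (auto simp: A1_def A2_def intro: integral_unique)
    have side: "norm (h x) \<le> K / R^2" if "x \<in> S" "R \<le> \<bar>Re x\<bar>" for x
    proof -
      have Ix: "0 \<le> Im x" using that by (simp add: S_def)
      have "R^2 \<le> \<bar>Re x\<bar>^2" using that R by (intro power_mono) auto
      also have "\<dots> \<le> norm x ^2" using abs_Re_le_cmod[of x] by (intro power_mono) auto
      finally have Rx: "R^2 \<le> norm x ^ 2" .
      have "norm x ^ 2 * norm (Psi \<phi> a b x) \<le> K"
        using PB2[OF Ix] expb[OF Ix] K0 by (smt (verit) mult_left_le)
      moreover have nx: "0 < norm x ^ 2" using Rx R by (meson less_le_trans zero_less_power)
      ultimately have "norm (Psi \<phi> a b x) \<le> K / norm x ^ 2"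
        by (simp add: pos_le_divide_eq mult.commute)
      also have "\<dots> \<le> K / R^2" using Rx R K0 by (intro divide_left_mono mult_pos_pos nx) auto
      finally show ?thesis using hP[OF Ix] by simp
    qed
    have "norm I2 \<le> K / R^2 * norm (A3 - A2)"
    proof (rule has_contour_integral_bound_linepath[OF h2])
      show "0 \<le> K / R^2" using K0 by simp
      fix x assume x: "x \<in> closed_segment A2 A3"
      then obtain u where u: "Re x = (1 - u) * Re A2 + u * Re A3" by (rule seg_ReIm)
      have "Re x = R" using u by (simp add: A2_def A3_def algebra_simps)
      then show "norm (h x) \<le> K / R^2" using side[of x] segS[OF inS(2,3)] x R by auto
    qed
    also have "\<dots> = K / R" using R by (simp add: A2_def A3_def power2_eq_square norm_complex_def)
    finally have n2: "norm I2 \<le> K / R" .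
    have "norm I4 \<le> K / R^2 * norm (A1 - A4)"
    proof (rule has_contour_integral_bound_linepath[OF h4])
      show "0 \<le> K / R^2" using K0 by simp
      fix x assume x: "x \<in> closed_segment A4 A1"
      then obtain u where u: "Re x = (1 - u) * Re A4 + u * Re A1" by (rule seg_ReIm)
      have "Re x = - R" using u by (simp add: A1_def A4_def algebra_simps)
      then show "norm (h x) \<le> K / R^2" using side[of x] segS[OF inS(4,1)] x R by auto
    qed
    also have "\<dots> = K / R" using R by (simp add: A1_def A4_def power2_eq_square norm_complex_def)
    finally have n4: "norm I4 \<le> K / R" .
    have "norm I3 \<le> K * exp (b * R) * norm (A4 - A3)"
    proof (rule has_contour_integral_bound_linepath[OF h3])
      show "0 \<le> K * exp (b * R)" using K0 by simp
      fix x assume x: "x \<in> closed_segment A3 A4"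
      then obtain u where u: "Im x = (1 - u) * Im A3 + u * Im A4" by (rule seg_ReIm)
      have Ix: "Im x = R" using u by (simp add: A3_def A4_def algebra_simps)
      then have "0 \<le> Im x" using R by simp
      then show "norm (h x) \<le> K * exp (b * R)" using hP PB Ix by (metis order_trans)
    qed
    also have "\<dots> = K * exp (b * R) * (2 * R)"
    proof -
      have "sqrt (4 * R^2) = sqrt ((2 * R)^2)" by (simp add: power2_eq_square)
      also have "\<dots> = \<bar>2 * R\<bar>" by (rule real_sqrt_abs)
      also have "\<dots> = 2 * R" using R by simp
      finally have "sqrt (4 * R^2) = 2 * R" .
      then show ?thesis using R by (simp add: A3_def A4_def norm_complex_def)
    qed
    finally have n3: "norm I3 \<le> K * exp (b * R) * (2 * R)" .
    have "I1 = - (I2 + (I3 + I4))" using sum0 eq_neg_iff_add_eq_0[of I1 "I2 + (I3 + I4)"] by blast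
    then have "norm I1 = norm (I2 + (I3 + I4))" by (simp only: norm_minus_cancel)
    also have "\<dots> \<le> norm I2 + norm I3 + norm I4"
      using norm_triangle_ineq[of I2 "I3 + I4"] norm_triangle_ineq[of I3 I4] by linarith
    also have "\<dots> \<le> 2 * K / R + 2 * K * R * exp (b * R)"
    proof -
      have e1: "K * exp (b * R) * (2 * R) = 2 * K * R * exp (b * R)" by (simp add: mult_ac)
      have e2: "K / R + K / R = 2 * K / R" by (simp add: field_simps)
      show ?thesis using n2 n3 n4 e1 e2 by linarith
    qed
    finally show ?thesis using I1eq by simp
  qed
  define hr where "hr = (\<lambda>x::real. h (of_real x))"
  have hrc: "continuous_on UNIV hr" unfolding hr_def
    by (rule continuous_on_compose2[OF hc continuous_on_of_real]) (auto simp: S_def)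
  have hrm: "hr \<in> borel_measurable lborel"
    using hrc by (simp add: borel_measurable_continuous_onI)
  have hrb: "norm (hr x) \<le> norm (2 * K * inverse (1 + x^2))" for x
  proof -
    have Im0: "0 \<le> Im (of_real x :: complex)" by simp
    have p1: "norm (Psi \<phi> a b (of_real x)) \<le> K" using PB[OF Im0] by simp
    have p2: "x^2 * norm (Psi \<phi> a b (of_real x)) \<le> K" using PB2[OF Im0] by simp
    have "(1 + x^2) * norm (Psi \<phi> a b (of_real x)) \<le> 2 * K" using p1 p2 by (simp add: algebra_simps)
    then have "norm (Psi \<phi> a b (of_real x)) \<le> 2 * K * inverse (1 + x^2)"
      by (simp add: field_simps add_pos_nonneg)
    then show ?thesis using hP[OF Im0] K0 unfolding hr_def by simp
  qed
  have int1: "integrable lborel (\<lambda>x::real. inverse (1 + x^2))"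
    using integrable_inverse_1_plus_square
    by (simp add: set_integrable_def einterval_def)
  have int2: "integrable lborel (\<lambda>x::real. 2 * K * inverse (1 + x^2))"
    using int1 by simp
  have hri: "integrable lborel hr"
    by (rule Bochner_Integration.integrable_bound[OF int2 hrm]) (use hrb in auto)
  then show "integrable lborel (\<lambda>\<omega>. h (of_real \<omega>))" by (simp add: hr_def)
  define s where "s R x = indicator {-R..R} x *\<^sub>R hr x" for R x
  have lim1: "((\<lambda>R. integral\<^sup>L lborel (s R)) \<longlongrightarrow> integral\<^sup>L lborel hr) at_top"
  proof (rule integral_dominated_convergence_at_top[where w="\<lambda>x. norm (hr x)"])
    show "hr \<in> borel_measurable lborel" by (rule hrm)
    show "s t \<in> borel_measurable lborel" for t unfolding s_def using hrm by measurable
    show "integrable lborel (\<lambda>x. norm (hr x))" using hri by simp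
    show "AE x in lborel. ((\<lambda>i. s i x) \<longlongrightarrow> hr x) at_top"
    proof (rule AE_I2, rule tendsto_eventually)
      fix x :: real
      show "\<forall>\<^sub>F i in at_top. s i x = hr x"
        using eventually_ge_at_top[of "\<bar>x\<bar>"]
      proof eventually_elim
        case (elim i)
        then have "x \<in> {-i..i}" by auto
        then show ?case by (simp add: s_def)
      qed
    qed
    show "\<forall>\<^sub>F i in at_top. AE x in lborel. norm (s i x) \<le> norm (hr x)"
      by (auto simp: s_def indicator_def)
  qed
  have seq: "integral\<^sup>L lborel (s R) = integral {-R..R} hr" for R
  proof -
    have si: "set_integrable lborel {-R..R} hr"
      unfolding set_integrable_def using hri by (intro integrable_mult_indicator) auto
    have se: "s R = (\<lambda>x. indicator {-R..R} x *\<^sub>R hr x)" by (rule ext) (simp add: s_def)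
    show ?thesis using set_borel_integral_eq_integral(2)[OF si] by (simp add: se set_lebesgue_integral_def)
  qed
  have lim2: "((\<lambda>R. integral {-R..R} hr) \<longlongrightarrow> 0) at_top"
  proof (rule Lim_null_comparison[OF _ lim_aux[OF ab(2) K0]])
    show "\<forall>\<^sub>F R in at_top. norm (integral {-R..R} hr) \<le> 2 * K / R + 2 * K * R * exp (b * R)"
      using eventually_gt_at_top[of "0::real"] by eventually_elim (use Rbound in \<open>simp add: hr_def\<close>)
  qed
  from lim1 have "((\<lambda>R. integral {-R..R} hr) \<longlongrightarrow> integral\<^sup>L lborel hr) at_top" by (simp add: seq)
  from tendsto_unique[OF _ this lim2] show "(LINT \<omega>|lborel. h (of_real \<omega>)) = 0"
    by (simp add: hr_def)
qed

theorem theorem7: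
  fixes c0 \<alpha>0 \<tau>0 \<gamma> :: real
  assumes "c0 > 0" and "\<alpha>0 > 0" and "\<tau>0 > 0" and "1 < \<gamma>" and "\<gamma> \<le> 2"
  shows "\<forall>(x :: real^3) \<phi>. test_fun_neg \<phi> \<longrightarrow>
           integrable lborel
             (\<lambda>\<omega>. exp (- alpha_ksb c0 \<alpha>0 \<tau>0 \<gamma> \<omega> * of_real (norm x)) * inv_fourier_fun \<phi> \<omega>)
         \<and> of_real (1 / sqrt (2 * pi)) *
             inv_fourier_pair (\<lambda>\<omega>. exp (- alpha_ksb c0 \<alpha>0 \<tau>0 \<gamma> \<omega> * of_real (norm x))) \<phi> = 0"
proof (intro allI impI)
  fix x :: "real^3" and \<phi> :: "real \<Rightarrow> real"
  assume tf: "test_fun_neg \<phi>"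
  then have sm: "smooth_fun \<phi>" by (simp add: test_fun_neg_def)
  note sd = smooth_derivs[OF sm]
  obtain a b where ab: "a < b" "b < 0" and zr: "\<And>t. t \<le> a \<or> b \<le> t \<Longrightarrow> \<phi> t = 0 \<and> deriv \<phi> t = 0"
    using supp_interval[OF tf] by blast
  define h where "h = (\<lambda>z. exp (- Ac c0 \<alpha>0 \<tau>0 \<gamma> z * of_real (norm x)) * Psi \<phi> a b z)"
  have ml: "integrable lborel (\<lambda>\<omega>. h (of_real \<omega>))" "(LINT \<omega>|lborel. h (of_real \<omega>)) = 0"
    using main_lemma[OF assms norm_ge_zero ab sd(1) sd(2) sd(3)] zr[of a] zr[of b]
    unfolding h_def by auto
  have eq: "(\<lambda>\<omega>. exp (- alpha_ksb c0 \<alpha>0 \<tau>0 \<gamma> \<omega> * of_real (norm x)) * inv_fourier_fun \<phi> \<omega>)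
      = (\<lambda>\<omega>. of_real (1 / sqrt (2 * pi)) * h (of_real \<omega>))"
    using inv_fourier_Psi[OF sd(4), of a b] zr by (auto simp: h_def alpha_Ac)
  show "integrable lborel
             (\<lambda>\<omega>. exp (- alpha_ksb c0 \<alpha>0 \<tau>0 \<gamma> \<omega> * of_real (norm x)) * inv_fourier_fun \<phi> \<omega>)
         \<and> of_real (1 / sqrt (2 * pi)) *
             inv_fourier_pair (\<lambda>\<omega>. exp (- alpha_ksb c0 \<alpha>0 \<tau>0 \<gamma> \<omega> * of_real (norm x))) \<phi> = 0"
    unfolding inv_fourier_pair_def eq using ml by simp
qed

end
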